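(* For every natural number $n>2$, the star $K_{1,n}$ is not $\mathcal{D}_t$-unique. In particular, the $\mathcal{D}_t$-equivalence class $[K_{1,n}]$ contains $K_{1,n}$, the lollipop graph $L(n,1)$, and every graph $L(n,1)-e$ where $e$ is an edge of the complete graph $K_n$ inside $L(n,1)$ that shares no endpoint with the pendant edge of $L(n,1)$.
   Context: $K_{1,n}$ is the star with one center and $n$ leaves. The lollipop graph $L(n,1)$ is the complete graph $K_n$ with one extra vertex joined by a single (pendant) edge to one vertex of $K_n$. For a finite simple graph $G=(V,E)$, a set $D\subseteq V$ is a total dominating set if every vertex of $V$ is adjacent to some vertex of $D$; $d_t(G,i)$ is the number of total dominating sets of size $i$, and $D_t(G,x)=\sum_{i} d_t(G,i)x^i$ is the total domination polynomial. Two graphs $G,H$ are $\mathcal{D}_t$-equivalent if $D_t(G,x)=D_t(H,x)$ (graphs being compared among graphs of the same order); $[G]$ is the class of graphs $\mathcal{D}_t$-equivalent to $G$, and $G$ is $\mathcal{D}_t$-unique if every graph $\mathcal{D}_t$-equivalent to $G$ is isomorphic to $G$. *)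

theory Defs
  imports Main "HOL-Computational_Algebra.Polynomial"
begin

type_synonym 'a graph = "'a set \<times> 'a set set"

definition verts :: "'a graph \<Rightarrow> 'a set" where "verts G = fst G"
definition edges :: "'a graph \<Rightarrow> 'a set set" where "edges G = snd G"

definition simple_graph :: "'a graph \<Rightarrow> bool" where
  "simple_graph G \<longleftrightarrow> finite (verts G) \<and> (\<forall>e\<in>edges G. e \<subseteq> verts G \<and> card e = 2)"

definition adj :: "'a graph \<Rightarrow> 'a \<Rightarrow> 'a \<Rightarrow> bool" where
  "adj G u v \<longleftrightarrow> {u, v} \<in> edges G"

definition total_dominating :: "'a graph \<Rightarrow> 'a set \<Rightarrow> bool" where
  "total_dominating G D \<longleftrightarrow> D \<subseteq> verts G \<and> (\<forall>v\<in>verts G. \<exists>u\<in>D. adj G v u)"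

definition dt :: "'a graph \<Rightarrow> nat \<Rightarrow> nat" where
  "dt G i = card {D. total_dominating G D \<and> card D = i}"

text \<open>Total domination polynomial (total dominating sets are subsets of V, so i ranges up to |V|).\<close>
definition total_dom_poly :: "'a graph \<Rightarrow> int poly" where
  "total_dom_poly G = (\<Sum>i\<le>card (verts G). monom (int (dt G i)) i)"

definition dt_equiv :: "'a graph \<Rightarrow> 'a graph \<Rightarrow> bool" where
  "dt_equiv G H \<longleftrightarrow> card (verts G) = card (verts H) \<and> total_dom_poly G = total_dom_poly H"

definition dt_class :: "'a graph \<Rightarrow> 'a graph set" where
  "dt_class G = {H. simple_graph H \<and> dt_equiv G H}"

definition graph_iso :: "'a graph \<Rightarrow> 'b graph \<Rightarrow> bool" where
  "graph_iso G H \<longleftrightarrow> (\<exists>f. bij_betw f (verts G) (verts H) \<and>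
      (\<forall>u\<in>verts G. \<forall>v\<in>verts G. {u, v} \<in> edges G \<longleftrightarrow> {f u, f v} \<in> edges H))"

definition dt_unique :: "'a graph \<Rightarrow> bool" where
  "dt_unique G \<longleftrightarrow> (\<forall>H\<in>dt_class G. graph_iso G H)"

definition star :: "nat \<Rightarrow> nat graph" where
  "star n = ({0..n}, {{0, i} | i. i \<in> {1..n}})"

definition complete_edges :: "'a set \<Rightarrow> 'a set set" where
  "complete_edges S = {{u, v} | u v. u \<in> S \<and> v \<in> S \<and> u \<noteq> v}"

definition lollipop :: "nat \<Rightarrow> nat graph" where
  "lollipop n = ({0..n}, complete_edges {0..<n} \<union> {{0, n}})"

definition delete_edge :: "'a graph \<Rightarrow> 'a set \<Rightarrow> 'a graph" where
  "delete_edge G e = (verts G, edges G - {e})"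

end

theory Submission
  imports Defs
begin

lemma td_char:
  assumes V: "verts (G::nat graph) = {0..n}" and n: "n \<ge> 1"
    and a: "\<And>i. i \<in> {1..n} \<Longrightarrow> {0, i} \<in> edges G"
    and b: "{0} \<notin> edges G"
    and c: "\<And>u. {n, u} \<in> edges G \<Longrightarrow> u = 0"
  shows "total_dominating G D \<longleftrightarrow> D \<subseteq> {0..n} \<and> 0 \<in> D \<and> (\<exists>i\<in>D. i \<noteq> 0)"
proof
  assume T: "total_dominating G D"
  hence sub: "D \<subseteq> {0..n}" and dom: "\<forall>v\<in>{0..n}. \<exists>u\<in>D. adj G v u"
    using V by (auto simp: total_dominating_def)
  from dom have "\<exists>u\<in>D. adj G n u" by (meson atLeastAtMost_iff le0 order_refl)
  then obtain u where "u \<in> D" "adj G n u" by auto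
  hence "0 \<in> D" using c by (auto simp: adj_def)
  moreover from dom obtain w where "w \<in> D" "adj G 0 w" by (meson atLeastAtMost_iff le0)
  hence "\<exists>i\<in>D. i \<noteq> 0" using b by (metis adj_def insert_absorb2)
  ultimately show "D \<subseteq> {0..n} \<and> 0 \<in> D \<and> (\<exists>i\<in>D. i \<noteq> 0)" using sub by auto
next
  assume H: "D \<subseteq> {0..n} \<and> 0 \<in> D \<and> (\<exists>i\<in>D. i \<noteq> 0)"
  then obtain i where i: "i \<in> D" "i \<noteq> 0" by auto
  have "\<forall>v\<in>verts G. \<exists>u\<in>D. adj G v u"
  proof
    fix v assume v: "v \<in> verts G"
    show "\<exists>u\<in>D. adj G v u"
    proof (cases "v = 0")
      case True
      have "i \<in> {1..n}" using i H by auto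
      then show ?thesis using a[of i] i True by (auto simp: adj_def)
    next
      case False
      have "v \<in> {1..n}" using v V False by auto
      then show ?thesis using a[of v] H by (auto simp: adj_def insert_commute)
    qed
  qed
  then show "total_dominating G D" using H V by (auto simp: total_dominating_def)
qed

lemma equiv_star:
  assumes V: "verts (G::nat graph) = {0..n}" and n: "n \<ge> 1"
    and a: "\<And>i. i \<in> {1..n} \<Longrightarrow> {0, i} \<in> edges G"
    and b: "{0} \<notin> edges G"
    and c: "\<And>u. {n, u} \<in> edges G \<Longrightarrow> u = 0"
  shows "dt_equiv (star n) G"
proof -
  have Vs: "verts (star n) = {0..n}" by (simp add: verts_def star_def)
  have as: "\<And>i. i \<in> {1..n} \<Longrightarrow> {0, i} \<in> edges (star n)"
    by (auto simp: edges_def star_def)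
  have bs: "{0} \<notin> edges (star n)"
    by (auto simp: edges_def star_def doubleton_eq_iff)
  have cs: "\<And>u. {n, u} \<in> edges (star n) \<Longrightarrow> u = 0"
    using n by (auto simp: edges_def star_def doubleton_eq_iff)
  have "\<And>D. total_dominating G D = total_dominating (star n) D"
    using td_char[OF V n a b c] td_char[OF Vs n as bs cs] by simp
  hence "\<And>i. dt G i = dt (star n) i" by (simp add: dt_def)
  thus ?thesis using V Vs by (simp add: dt_equiv_def total_dom_poly_def)
qed

lemma simple_star: "simple_graph (star n)"
  by (auto simp: simple_graph_def star_def verts_def edges_def)

lemma simple_loll: "n > 0 \<Longrightarrow> simple_graph (lollipop n)"
  by (auto simp: simple_graph_def lollipop_def verts_def edges_def complete_edges_def)

lemma simple_del: "simple_graph G \<Longrightarrow> simple_graph (delete_edge G e)"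
  by (auto simp: simple_graph_def delete_edge_def verts_def edges_def)

lemma loll_edges: "{u, v} \<in> edges (lollipop n) \<longleftrightarrow>
   (u \<noteq> v \<and> u < n \<and> v < n) \<or> {u, v} = {0, n}"
  by (auto simp: lollipop_def edges_def complete_edges_def doubleton_eq_iff)

theorem mainTheorem6:
  fixes n :: nat
  assumes "n > 2"
  shows "\<not> dt_unique (star n) \<and>
         star n \<in> dt_class (star n) \<and>
         lollipop n \<in> dt_class (star n) \<and>
         (\<forall>e \<in> complete_edges {0..<n}. e \<inter> {0, n} = {} \<longrightarrow>
             delete_edge (lollipop n) e \<in> dt_class (star n))"
proof -
  have n1: "n \<ge> 1" using assms by auto
  have Vl: "verts (lollipop n) = {0..n}" by (simp add: verts_def lollipop_def)
  have al: "\<And>i. i \<in> {1..n} \<Longrightarrow> {0, i} \<in> edges (lollipop n)"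
    using loll_edges by auto
  have bl: "{0} \<notin> edges (lollipop n)"
    using loll_edges[of 0 0 n] n1 by (auto simp: doubleton_eq_iff)
  have cl: "\<And>u. {n, u} \<in> edges (lollipop n) \<Longrightarrow> u = 0"
    using loll_edges by (auto simp: doubleton_eq_iff)
  have L: "lollipop n \<in> dt_class (star n)"
    using equiv_star[OF Vl n1 al bl cl] simple_loll[of n] n1 by (simp add: dt_class_def)
  have S: "star n \<in> dt_class (star n)"
    using simple_star by (simp add: dt_class_def dt_equiv_def)
  have D: "\<forall>e \<in> complete_edges {0..<n}. e \<inter> {0, n} = {} \<longrightarrow>
             delete_edge (lollipop n) e \<in> dt_class (star n)"
  proof (intro ballI impI)
    fix e assume e: "e \<in> complete_edges {0..<n}" "e \<inter> {0, n} = {}"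
    let ?G = "delete_edge (lollipop n) e"
    have V: "verts ?G = {0..n}" using Vl by (simp add: delete_edge_def verts_def)
    have E: "edges ?G = edges (lollipop n) - {e}" by (simp add: delete_edge_def edges_def)
    have a: "\<And>i. i \<in> {1..n} \<Longrightarrow> {0, i} \<in> edges ?G"
      using al e(2) E by auto
    have "dt_equiv (star n) ?G"
      by (rule equiv_star[OF V n1 a]) (use bl cl E in auto)
    thus "?G \<in> dt_class (star n)"
      using simple_del[OF simple_loll[of n]] n1 by (simp add: dt_class_def)
  qed
  have NI: "\<not> graph_iso (star n) (lollipop n)"
  proof
    assume "graph_iso (star n) (lollipop n)"
    then obtain f where bij: "bij_betw f {0..n} {0..n}"
      and iso: "\<forall>u\<in>{0..n}. \<forall>v\<in>{0..n}. {u, v} \<in> edges (star n) \<longleftrightarrow> {f u, f v} \<in> edges (lollipop n)"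
      using Vl by (auto simp: graph_iso_def star_def verts_def)
    let ?g = "inv_into {0..n} f"
    have g: "\<And>x. x \<in> {0..n} \<Longrightarrow> ?g x \<in> {0..n} \<and> f (?g x) = x"
      using bij by (metis bij_betw_inv_into_right bij_betw_inv_into bij_betwE)
    have inj: "\<And>x y. x \<in> {0..n} \<Longrightarrow> y \<in> {0..n} \<Longrightarrow> ?g x = ?g y \<Longrightarrow> x = y"
      using g by metis
    have se: "\<And>u v. {u, v} \<in> edges (star n) \<Longrightarrow> u = 0 \<or> v = 0"
      by (auto simp: star_def edges_def doubleton_eq_iff)
    have adj: "\<And>x y. x < n \<Longrightarrow> y < n \<Longrightarrow> x \<noteq> y \<Longrightarrow> ?g x = 0 \<or> ?g y = 0"
    proof -
      fix x y assume xy: "x < n" "y < n" "x \<noteq> y"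
      have "{f (?g x), f (?g y)} \<in> edges (lollipop n)"
        using g[of x] g[of y] xy loll_edges by auto
      hence "{?g x, ?g y} \<in> edges (star n)" using iso g[of x] g[of y] xy by auto
      thus "?g x = 0 \<or> ?g y = 0" by (rule se)
    qed
    have d: "?g 0 \<noteq> ?g 1" "?g 0 \<noteq> ?g 2" "?g 1 \<noteq> ?g 2"
      using inj[of 0 1] inj[of 0 2] inj[of 1 2] assms by auto
    show False using adj[of 0 1] adj[of 0 2] adj[of 1 2] assms d by auto
  qed
  have "\<not> dt_unique (star n)" using L NI by (auto simp: dt_unique_def)
  thus ?thesis using L S D by blast
qed

end
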